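(* Let $c\in\mathbb{Q}$ and, for $n\ge1$, $\psi_n^{(c)}=R_y\phi_{n-1}^{(c)}R_x$. Then $\psi_1^{(c)}=R_{xy}$ and for $n\ge2$, $$\psi_n^{(c)}=\frac{1}{n-1}\Bigl([\theta^{(c)},\psi_{n-1}^{(c)}]-\tfrac12\bigl(R_z\psi_{n-1}^{(c)}+\psi_{n-1}^{(c)}R_z\bigr)-c\,\psi_{n-1}^{(c)}\partial_1\Bigr).$$
   Context: Let $\mathfrak{H}=\mathbb{Q}\langle x,y\rangle$, $z=x+y$. Products of operators denote composition, $[A,B]=AB-BA$. $R_w(w')=w'w$ (right multiplication). $H$ is the $\mathbb{Q}$-linear map with $H(w)=\deg(w)w$ for words $w$. $\partial_1$ is the derivation with $\partial_1(x)=xy$, $\partial_1(y)=-xy$. For $c\in\mathbb{Q}$, $\theta^{(c)}$ is the unique $\mathbb{Q}$-linear map with $\theta^{(c)}(x)=\frac12(xz+zx)$, $\theta^{(c)}(y)=\frac12(yz+zy)$ and $\theta^{(c)}(ww')=\theta^{(c)}(w)w'+w\theta^{(c)}(w')+c\,\partial_1(w)H(w')$. The operators $\phi_n^{(c)}$ ($n\ge0$) are defined by $\phi_0^{(c)}=\mathrm{id}_{\mathfrak{H}}$ and $\phi_n^{(c)}=\frac1n\bigl([\theta^{(c)},\phi_{n-1}^{(c)}]+\frac12(R_z\phi_{n-1}^{(c)}+\phi_{n-1}^{(c)}R_z)+c\,\partial_1\phi_{n-1}^{(c)}\bigr)$ for $n\ge1$. *)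

theory Defs
  imports Complex_Main "HOL-Library.Poly_Mapping"
begin

text \<open>The free algebra Q<x,y>: finitely supported Q-valued functions on words.\<close>

datatype letter = LX | LY

type_synonym hf = "letter list \<Rightarrow>\<^sub>0 rat"

definition wd :: "letter list \<Rightarrow> hf" where
  "wd u = Poly_Mapping.single u 1"

definition sc :: "rat \<Rightarrow> hf \<Rightarrow> hf" where
  "sc a p = Poly_Mapping.map (\<lambda>b. a * b) p"

definition lin :: "(letter list \<Rightarrow> hf) \<Rightarrow> hf \<Rightarrow> hf" where
  "lin f p = (\<Sum>u\<in>Poly_Mapping.keys p. sc (Poly_Mapping.lookup p u) (f u))"

definition hmul :: "hf \<Rightarrow> hf \<Rightarrow> hf" where
  "hmul p q = lin (\<lambda>u. lin (\<lambda>v. wd (u @ v)) q) p"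

definition hx :: hf where "hx = wd [LX]"
definition hy :: hf where "hy = wd [LY]"
definition hz :: hf where "hz = hx + hy"

definition Rm :: "hf \<Rightarrow> hf \<Rightarrow> hf" where
  "Rm w p = hmul p w"

definition Hop :: "hf \<Rightarrow> hf" where
  "Hop = lin (\<lambda>u. sc (of_nat (length u)) (wd u))"

fun d1l :: "letter \<Rightarrow> hf" where
  "d1l LX = wd [LX, LY]"
| "d1l LY = - wd [LX, LY]"

fun d1w :: "letter list \<Rightarrow> hf" where
  "d1w [] = 0"
| "d1w (a # u) = hmul (d1l a) (wd u) + hmul (wd [a]) (d1w u)"

definition d1 :: "hf \<Rightarrow> hf" where
  "d1 = lin d1w"

text \<open>theta^(c) on letters and on words (recursion on the first letter, a special case
  of the defining rule theta(ww') = theta(w)w' + w theta(w') + c d1(w) H(w')).\<close>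
definition thl :: "letter \<Rightarrow> hf" where
  "thl a = sc (1/2) (hmul (wd [a]) hz + hmul hz (wd [a]))"

fun thw :: "rat \<Rightarrow> letter list \<Rightarrow> hf" where
  "thw c [] = 0"
| "thw c (a # u) = hmul (thl a) (wd u) + hmul (wd [a]) (thw c u)
                    + sc c (hmul (d1l a) (Hop (wd u)))"

definition theta :: "rat \<Rightarrow> hf \<Rightarrow> hf" where
  "theta c = lin (thw c)"

text \<open>phi_n^(c); products of operators are compositions.\<close>
fun phi :: "rat \<Rightarrow> nat \<Rightarrow> hf \<Rightarrow> hf" where
  "phi c 0 = id"
| "phi c (Suc n) = (\<lambda>p. sc (1 / of_nat (Suc n))
      (theta c (phi c n p) - phi c n (theta c p)
       + sc (1/2) (Rm hz (phi c n p) + phi c n (Rm hz p))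
       + sc c (d1 (phi c n p))))"

definition psi :: "rat \<Rightarrow> nat \<Rightarrow> hf \<Rightarrow> hf" where
  "psi c n = Rm hy \<circ> phi c (n - 1) \<circ> Rm hx"

end

theory Submission imports Defs begin

lemma lookup_sc[simp]: "Poly_Mapping.lookup (sc a p) k = a * Poly_Mapping.lookup p k"
  unfolding sc_def by (simp add: Poly_Mapping.map.rep_eq when_def)

lemma lookup_wd: "Poly_Mapping.lookup (wd u) v = (if u = v then 1 else 0)"
  unfolding wd_def by (simp add: lookup_single)

lemma keys_sc: "Poly_Mapping.keys (sc a p) \<subseteq> Poly_Mapping.keys p"
  by (auto simp: in_keys_iff)

lemma lookup_lin_S:
  assumes "finite S" "Poly_Mapping.keys p \<subseteq> S"
  shows "Poly_Mapping.lookup (lin f p) v = (\<Sum>u\<in>S. Poly_Mapping.lookup p u * Poly_Mapping.lookup (f u) v)"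
proof -
  have "Poly_Mapping.lookup (lin f p) v = (\<Sum>u\<in>Poly_Mapping.keys p. Poly_Mapping.lookup p u * Poly_Mapping.lookup (f u) v)"
    unfolding lin_def by (simp add: lookup_sum)
  also have "\<dots> = (\<Sum>u\<in>S. Poly_Mapping.lookup p u * Poly_Mapping.lookup (f u) v)"
    using assms by (intro sum.mono_neutral_left) (auto simp: in_keys_iff)
  finally show ?thesis .
qed

lemma lin_add: "lin f (p + q) = lin f p + lin f q"
proof (rule poly_mapping_eqI)
  fix v
  let ?S = "Poly_Mapping.keys p \<union> Poly_Mapping.keys q"
  have "Poly_Mapping.keys (p+q) \<subseteq> ?S" by (rule keys_add)
  then show "Poly_Mapping.lookup (lin f (p + q)) v = Poly_Mapping.lookup (lin f p + lin f q) v"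
    by (simp add: lookup_add lookup_lin_S[of ?S] distrib_right sum.distrib)
qed

lemma lin_sc: "lin f (sc a p) = sc a (lin f p)"
proof (rule poly_mapping_eqI)
  fix v
  show "Poly_Mapping.lookup (lin f (sc a p)) v = Poly_Mapping.lookup (sc a (lin f p)) v"
    using keys_sc[of a p]
    by (simp add: lookup_lin_S[of "Poly_Mapping.keys p"] sum_distrib_left mult.assoc)
qed

lemma lin_fadd: "lin (\<lambda>u. f u + g u) p = lin f p + lin g p"
  by (rule poly_mapping_eqI) (simp add: lookup_add lookup_lin_S[of "Poly_Mapping.keys p"] distrib_left sum.distrib)

lemma lin_fsc: "lin (\<lambda>u. sc a (f u)) p = sc a (lin f p)"
  by (rule poly_mapping_eqI) (simp add: lookup_lin_S[of "Poly_Mapping.keys p"] sum_distrib_left algebra_simps)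

lemma lin_expand: "lin wd p = p"
proof (rule poly_mapping_eqI)
  fix v
  have "Poly_Mapping.lookup (lin wd p) v = (\<Sum>u\<in>insert v (Poly_Mapping.keys p). Poly_Mapping.lookup p u * Poly_Mapping.lookup (wd u) v)"
    by (rule lookup_lin_S) auto
  also have "\<dots> = Poly_Mapping.lookup p v"
    by (simp add: lookup_wd sum.remove[of _ v] if_distrib cong: if_cong)
  finally show "Poly_Mapping.lookup (lin wd p) v = Poly_Mapping.lookup p v" .
qed

definition linop :: "(hf \<Rightarrow> hf) \<Rightarrow> bool" where
  "linop T \<longleftrightarrow> (\<forall>p q. T (p + q) = T p + T q) \<and> (\<forall>a p. T (sc a p) = sc a (T p))"

lemma linop_lin: "linop (lin f)"
  by (simp add: linop_def lin_add lin_sc)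

lemma sc_zero[simp]: "sc 0 p = 0" by (rule poly_mapping_eqI) simp
lemma sc_one[simp]: "sc 1 p = p" by (rule poly_mapping_eqI) simp
lemma sc_neg1: "sc (-1) p = - p" by (rule poly_mapping_eqI) simp
lemma sc_zero2[simp]: "sc a 0 = 0" by (rule poly_mapping_eqI) simp

lemma lin_wd[simp]: "lin f (wd u) = f u"
  unfolding lin_def wd_def by simp

lemma linop_zero: "linop T \<Longrightarrow> T 0 = 0"
  unfolding linop_def by (metis sc_zero)
lemma linop_uminus: "linop T \<Longrightarrow> T (- p) = - T p"
  unfolding linop_def by (metis sc_neg1)
lemma linop_diff: "linop T \<Longrightarrow> T (p - q) = T p - T q"
  using linop_uminus[of T q] unfolding linop_def by (metis diff_conv_add_uminus)
lemma linop_add: "linop T \<Longrightarrow> T (p + q) = T p + T q"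
  unfolding linop_def by blast
lemma linop_sc: "linop T \<Longrightarrow> T (sc a p) = sc a (T p)"
  unfolding linop_def by blast

lemma linop_sum: "linop T \<Longrightarrow> T (sum g A) = (\<Sum>x\<in>A. T (g x))"
  by (induction A rule: infinite_finite_induct) (auto simp: linop_zero linop_add)

lemma linop_on_lin: "linop T \<Longrightarrow> T (lin g p) = lin (\<lambda>u. T (g u)) p"
  unfolding lin_def by (simp add: linop_sum linop_sc)

lemma linop_ext:
  assumes "linop S" "linop T" "\<And>u. S (wd u) = T (wd u)"
  shows "S p = T p"
proof -
  have "S p = S (lin wd p)" by (simp add: lin_expand)
  also have "\<dots> = lin (\<lambda>u. S (wd u)) p" by (rule linop_on_lin[OF assms(1)])
  also have "\<dots> = lin (\<lambda>u. T (wd u)) p" using assms(3) by simp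
  also have "\<dots> = T (lin wd p)" by (rule linop_on_lin[OF assms(2), symmetric])
  finally show ?thesis by (simp add: lin_expand)
qed


lemma sc_add: "sc a (p + q) = sc a p + sc a q" by (rule poly_mapping_eqI) (simp add: lookup_add algebra_simps)

lemma linop_comp: "linop S \<Longrightarrow> linop T \<Longrightarrow> linop (S \<circ> T)"
  by (simp add: linop_def)

lemma hmul_left: "linop (\<lambda>p. hmul p q)"
  unfolding hmul_def by (rule linop_lin)

lemma hmul_right: "linop (\<lambda>q. hmul p q)"
  unfolding hmul_def linop_def
  by (simp add: lin_add lin_sc lin_fadd lin_fsc)

lemma hmul_wd[simp]: "hmul (wd u) (wd v) = wd (u @ v)"
  by (simp add: hmul_def)

lemmas hmul_add_l = linop_add[OF hmul_left] and hmul_add_r = linop_add[OF hmul_right]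
  and hmul_sc_l = linop_sc[OF hmul_left] and hmul_sc_r = linop_sc[OF hmul_right]
  and hmul_diff_l = linop_diff[OF hmul_left] and hmul_diff_r = linop_diff[OF hmul_right]
  and hmul_neg_l = linop_uminus[OF hmul_left] and hmul_neg_r = linop_uminus[OF hmul_right]
  and hmul_0_l = linop_zero[OF hmul_left] and hmul_0_r = linop_zero[OF hmul_right]

lemma hmul_assoc: "hmul (hmul p q) r = hmul p (hmul q r)"
proof -
  have A: "hmul (wd (u @ v)) r = hmul (wd u) (hmul (wd v) r)" for u v
    by (rule linop_ext[where S="\<lambda>r. hmul (wd (u @ v)) r"])
       (simp_all add: hmul_right linop_comp[unfolded comp_def])
  have B: "hmul (hmul (wd u) q) r = hmul (wd u) (hmul q r)" for u
    by (rule linop_ext[where S="\<lambda>q. hmul (hmul (wd u) q) r"])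
       (simp_all add: A hmul_left hmul_right linop_comp[unfolded comp_def, of "\<lambda>x. hmul x r"]
          linop_comp[unfolded comp_def, of "hmul (wd u)" "\<lambda>x. hmul x r"])
  show ?thesis
    by (rule linop_ext[where S="\<lambda>p. hmul (hmul p q) r"])
       (simp_all add: B hmul_left hmul_right linop_comp[unfolded comp_def, of "\<lambda>x. hmul x r" "\<lambda>x. hmul x q"])
qed


lemma linop_addop: "linop S \<Longrightarrow> linop T \<Longrightarrow> linop (\<lambda>p. S p + T p)"
  by (simp add: linop_def sc_add algebra_simps)
lemma linop_diffop: "linop S \<Longrightarrow> linop T \<Longrightarrow> linop (\<lambda>p. S p - T p)"
  unfolding linop_def
  by (auto simp: poly_mapping_eq_iff lookup_add lookup_minus fun_eq_iff algebra_simps)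
lemma linop_scop: "linop S \<Longrightarrow> linop (\<lambda>p. sc a (S p))"
  unfolding linop_def
  by (auto simp: poly_mapping_eq_iff lookup_add fun_eq_iff algebra_simps)
lemma linop_id: "linop (\<lambda>p. p)" by (simp add: linop_def)

lemma linop_theta: "linop (theta c)" unfolding theta_def by (rule linop_lin)
lemma linop_d1: "linop d1" unfolding d1_def by (rule linop_lin)
lemma linop_Hop: "linop Hop" unfolding Hop_def by (rule linop_lin)

lemma theta_wd[simp]: "theta c (wd u) = thw c u" by (simp add: theta_def)
lemma d1_wd[simp]: "d1 (wd u) = d1w u" by (simp add: d1_def)
lemma Hop_wd[simp]: "Hop (wd u) = sc (of_nat (length u)) (wd u)" by (simp add: Hop_def)

lemma hmul_nil_l[simp]: "hmul (wd []) p = p"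
  by (rule linop_ext[OF hmul_right linop_id]) simp
lemma hmul_nil_r[simp]: "hmul p (wd []) = p"
  by (rule linop_ext[OF hmul_left linop_id]) simp

lemma thw_snoc:
  "thw c (w @ [b]) = hmul (thw c w) (wd [b]) + hmul (wd w) (thl b) + sc c (hmul (d1w w) (wd [b]))"
proof (induction w)
  case Nil
  then show ?case by (simp add: hmul_0_l hmul_0_r)
next
  case (Cons a w)
  have e: "wd (a # w) = hmul (wd [a]) (wd w)" by simp
  show ?case
    apply (simp only: append_Cons thw.simps Cons d1w.simps Hop_wd e)
    apply (rule poly_mapping_eqI)
    apply (simp add: hmul_add_l hmul_add_r hmul_sc_l hmul_sc_r hmul_assoc lookup_add algebra_simps)
    apply (metis append_Cons append_Nil hmul_assoc hmul_wd)
    done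
qed


lemma theta_R:
  "theta c (hmul p (wd [b])) = hmul (theta c p) (wd [b]) + hmul p (thl b) + sc c (hmul (d1 p) (wd [b]))"
proof (rule linop_ext[where S="\<lambda>p. theta c (hmul p (wd [b]))"])
  show "linop (\<lambda>p. theta c (hmul p (wd [b])))"
    using linop_comp[OF linop_theta hmul_left] by (simp add: comp_def)
  show "linop (\<lambda>p. hmul (theta c p) (wd [b]) + hmul p (thl b) + sc c (hmul (d1 p) (wd [b])))"
    by (intro linop_addop linop_scop hmul_left
        linop_comp[OF hmul_left linop_theta, unfolded comp_def]
        linop_comp[OF hmul_left linop_d1, unfolded comp_def])
  show "theta c (hmul (wd u) (wd [b])) =
          hmul (theta c (wd u)) (wd [b]) + hmul (wd u) (thl b) + sc c (hmul (d1 (wd u)) (wd [b]))" for u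
    by (simp add: thw_snoc)
qed

lemma linop_phi: "linop (phi c n)"
proof (induction n)
  case 0
  then show ?case using linop_id by (simp add: id_def)
next
  case (Suc n)
  show ?case
    unfolding phi.simps Rm_def
    by (intro linop_addop linop_diffop linop_scop hmul_left Suc
        linop_comp[OF linop_theta Suc, unfolded comp_def]
        linop_comp[OF Suc linop_theta, unfolded comp_def]
        linop_comp[OF hmul_left Suc, unfolded comp_def]
        linop_comp[OF Suc hmul_left, unfolded comp_def]
        linop_comp[OF linop_d1 Suc, unfolded comp_def])
qed

lemmas phi_add = linop_add[OF linop_phi] and phi_sc = linop_sc[OF linop_phi]
  and phi_diff = linop_diff[OF linop_phi]
lemmas th_add = linop_add[OF linop_theta] and th_sc = linop_sc[OF linop_theta]
  and th_diff = linop_diff[OF linop_theta]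

lemma theta_Rx: "theta c (hmul p hx) = hmul (theta c p) hx
   + sc (1/2) (hmul p (hmul hx hz) + hmul p (hmul hz hx)) + sc c (hmul (d1 p) hx)"
  unfolding hx_def theta_R thl_def by (simp add: hmul_sc_r hmul_add_r hmul_assoc)
lemma theta_Ry: "theta c (hmul p hy) = hmul (theta c p) hy
   + sc (1/2) (hmul p (hmul hy hz) + hmul p (hmul hz hy)) + sc c (hmul (d1 p) hy)"
  unfolding hy_def theta_R thl_def by (simp add: hmul_sc_r hmul_add_r hmul_assoc)

theorem mainTheorem4:
  fixes c :: rat
  shows "psi c 1 = Rm (wd [LX, LY])
    \<and> (\<forall>n\<ge>2. psi c n = (\<lambda>p. sc (1 / of_nat (n - 1))
          (theta c (psi c (n - 1) p) - psi c (n - 1) (theta c p)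
           - sc (1/2) (Rm hz (psi c (n - 1) p) + psi c (n - 1) (Rm hz p))
           - sc c (psi c (n - 1) (d1 p)))))"
proof (intro conjI allI impI)
  show "psi c 1 = Rm (wd [LX, LY])"
    by (simp add: psi_def Rm_def fun_eq_iff hmul_assoc hx_def hy_def)
  fix n :: nat assume "2 \<le> n"
  then obtain m where n: "n = Suc (Suc m)" by (metis add_2_eq_Suc le_Suc_ex)
  show "psi c n = (\<lambda>p. sc (1 / of_nat (n - 1))
          (theta c (psi c (n - 1) p) - psi c (n - 1) (theta c p)
           - sc (1/2) (Rm hz (psi c (n - 1) p) + psi c (n - 1) (Rm hz p))
           - sc c (psi c (n - 1) (d1 p))))"
  proof
    fix p
    show "psi c n p = sc (1 / of_nat (n - 1))
          (theta c (psi c (n - 1) p) - psi c (n - 1) (theta c p)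
           - sc (1/2) (Rm hz (psi c (n - 1) p) + psi c (n - 1) (Rm hz p))
           - sc c (psi c (n - 1) (d1 p)))"
      apply (simp only: n psi_def Rm_def comp_def diff_Suc_Suc diff_0 phi.simps)
      apply (simp only: Rm_def theta_Rx theta_Ry hmul_assoc phi_add phi_sc phi_diff)
      apply (rule poly_mapping_eqI)
      apply (simp add: hmul_add_l hmul_sc_l hmul_diff_l hmul_assoc lookup_add lookup_minus Rm_def theta_Rx theta_Ry phi_add phi_sc phi_diff algebra_simps)
      done
  qed
qed

end
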